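(* Let $\epsilon\le 1/10$ and consider the multi-value algorithm (with suitable constants $c_1,c_2,c_3>0$) against a late $\epsilon$-bounded adaptive blocking adversary. Then, with high probability, $\sigma_1=\Omega(\log n)$.
   Context: Model: $n$ anonymous nodes, fully interconnected, synchronous rounds; in each round every node first receives the non-blocked messages sent to it in the previous round, computes, then sends messages. Late $\epsilon$-bounded adaptive adversary: at the start of each round $t\ge2$ it knows the full system state at the beginning of round $t-1$ and blocks a set $B_t$ of at most $\epsilon n$ nodes in round $t$ (blocked nodes neither send nor receive in that round); in round 1 it knows the initial state but not that round's coin flips. W.h.p. means with probability at least $1-n^{-\Omega(1)}$. Multi-value algorithm (constants $c_1,c_2,c_3>0$; inputs from a domain of size polynomial in $n$; $\bot$ is a special value with $\bot\le x$ for all $x$): (1) every node $u$ initializes $x_u$ to its input and becomes active with probability $c_1\log n/n$, otherwise inactive; (2) each active node sends $x_u$ to $\lceil c_2\log n\rceil$ nodes chosen uniformly at random; (3) every inactive or blocked node $v$ sets $x_v=\bot$; (4) for iterations $t=1,\dots,\lceil c_3\log n\rceil$, every node $v$ sets $x_v=\max(R\cup\{x_v\})$ where $R$ is the set of newly received values, becomes active if $x_v\neq\bot$, and, if $t<c_3\log n$ and $v$ is active, sends $x_v$ to $2$ nodes chosen uniformly at random; (5) finally every node decides on $x_u$. Let $A$ be the set of nodes active in round 1 and $B_1$ the set of nodes blocked in round 1; $x^*$ is the maximum input value among nodes in $A\setminus B_1$; $\sigma_t$ is the number of nodes whose value is $x^*$ at the end of round (iteration) $t$. *)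

theory Defs
  imports "HOL-Probability.Probability" "HOL-Library.Option_ord"
begin

(* Values are 'nat option'; None plays the role of the special value \<bottom>
   (None \<le> x for all x by Option_ord).
   act u   : coin flip of step (1), node u active in round 1.
   tg (u,i): i-th uniformly random target (i < m = ceil(c2 log n)) of node u in step (2).
   B1, B2  : the nodes blocked in round 1 and round 2 (= iteration 1). *)

definition num_targets :: "nat \<Rightarrow> real \<Rightarrow> nat" where
  "num_targets n c2 = nat \<lceil>c2 * ln (real n)\<rceil>"

definition round1_pmf :: "nat \<Rightarrow> real \<Rightarrow> real \<Rightarrow> ((nat \<Rightarrow> bool) \<times> (nat \<times> nat \<Rightarrow> nat)) pmf" where
  "round1_pmf n c1 c2 =
     pair_pmf (Pi_pmf {..<n} False (\<lambda>_. bernoulli_pmf (c1 * ln (real n) / real n)))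
              (Pi_pmf ({..<n} \<times> {..<num_targets n c2}) 0 (\<lambda>_. pmf_of_set {..<n}))"

definition senders :: "nat \<Rightarrow> nat set \<Rightarrow> (nat \<Rightarrow> bool) \<Rightarrow> nat set" where
  "senders n B1 act = {u \<in> {..<n}. act u \<and> u \<notin> B1}"

definition xstar :: "nat \<Rightarrow> (nat \<Rightarrow> nat) \<Rightarrow> nat set \<Rightarrow> (nat \<Rightarrow> bool) \<Rightarrow> nat" where
  "xstar n inp B1 act = Max (inp ` senders n B1 act)"

definition val0 :: "nat \<Rightarrow> (nat \<Rightarrow> nat) \<Rightarrow> nat set \<Rightarrow> (nat \<Rightarrow> bool) \<Rightarrow> nat \<Rightarrow> nat option" where
  "val0 n inp B1 act v = (if v \<in> senders n B1 act then Some (inp v) else None)"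

definition recvd1 :: "nat \<Rightarrow> real \<Rightarrow> (nat \<Rightarrow> nat) \<Rightarrow> nat set \<Rightarrow> nat set \<Rightarrow>
    (nat \<Rightarrow> bool) \<Rightarrow> (nat \<times> nat \<Rightarrow> nat) \<Rightarrow> nat \<Rightarrow> nat option set" where
  "recvd1 n c2 inp B1 B2 act tg v =
     (if v \<in> B2 then {}
      else {Some (inp u) | u. u \<in> senders n B1 act \<and> (\<exists>i < num_targets n c2. tg (u, i) = v)})"

definition val1 :: "nat \<Rightarrow> real \<Rightarrow> (nat \<Rightarrow> nat) \<Rightarrow> nat set \<Rightarrow> nat set \<Rightarrow>
    (nat \<Rightarrow> bool) \<Rightarrow> (nat \<times> nat \<Rightarrow> nat) \<Rightarrow> nat \<Rightarrow> nat option" where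
  "val1 n c2 inp B1 B2 act tg v = Max (insert (val0 n inp B1 act v) (recvd1 n c2 inp B1 B2 act tg v))"

definition sigma1 :: "nat \<Rightarrow> real \<Rightarrow> (nat \<Rightarrow> nat) \<Rightarrow> nat set \<Rightarrow> nat set \<Rightarrow>
    (nat \<Rightarrow> bool) \<Rightarrow> (nat \<times> nat \<Rightarrow> nat) \<Rightarrow> nat" where
  "sigma1 n c2 inp B1 B2 act tg =
     card {v \<in> {..<n}. val1 n c2 inp B1 B2 act tg v = Some (xstar n inp B1 act)}"

end

theory Submission
  imports Defs "HOL-Real_Asymp.Real_Asymp"
begin

lemma Pi_pmf_sub:
  assumes "finite A" "T \<subseteq> A"
  shows "measure_pmf.prob (Pi_pmf A d p) {f. \<forall>x\<in>T. f x \<in> C x} = (\<Prod>x\<in>T. measure_pmf.prob (p x) (C x))"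
proof -
  have "{f. \<forall>x\<in>T. f x \<in> C x} = Pi A (\<lambda>x. if x \<in> T then C x else UNIV)"
    using assms(2) by (auto simp: Pi_def)
  then have "measure_pmf.prob (Pi_pmf A d p) {f. \<forall>x\<in>T. f x \<in> C x}
     = (\<Prod>x\<in>A. measure_pmf.prob (p x) (if x \<in> T then C x else UNIV))"
    using measure_Pi_pmf_Pi[OF assms(1)] by simp
  also have "\<dots> = (\<Prod>x\<in>A. if x \<in> T then measure_pmf.prob (p x) (C x) else 1)"
    by (intro prod.cong) auto
  also have "\<dots> = (\<Prod>x\<in>T. measure_pmf.prob (p x) (C x))"
    using assms by (simp add: prod.If_cases Int_absorb1)
  finally show ?thesis .
qed

lemma pair_slice:
  assumes "\<And>a. a \<in> S \<Longrightarrow> measure_pmf.prob B {b. (a,b) \<in> F} \<le> q" "q \<ge> 0"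
  shows "measure_pmf.prob (pair_pmf A B) {(a,b). a \<notin> S \<or> (a,b) \<in> F} \<le> measure_pmf.prob A (-S) + q"
proof -
  have sub: "{(a,b). a \<notin> S \<or> (a,b) \<in> F} \<subseteq> fst -` (-S) \<union> (F \<inter> (S \<times> UNIV))" by auto
  have 1: "measure_pmf.prob (pair_pmf A B) (fst -` (-S)) = measure_pmf.prob A (-S)"
  proof -
    have "measure_pmf.prob (pair_pmf A B) (fst -` (-S)) = measure_pmf.prob (map_pmf fst (pair_pmf A B)) (-S)"
      by simp
    then show ?thesis by (simp add: map_fst_pair_pmf)
  qed
  have "emeasure (measure_pmf (pair_pmf A B)) (F \<inter> (S \<times> UNIV)) =
        (\<integral>\<^sup>+x. indicator (F \<inter> (S \<times> UNIV)) x \<partial>pair_pmf A B)"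
    by simp
  also have "\<dots> = (\<integral>\<^sup>+a. \<integral>\<^sup>+b. indicator (F \<inter> (S \<times> UNIV)) (a,b) \<partial>B \<partial>A)"
    by (rule nn_integral_pair_pmf')
  also have "\<dots> \<le> (\<integral>\<^sup>+a. ennreal q \<partial>A)"
  proof (intro nn_integral_mono)
    fix a
    show "(\<integral>\<^sup>+b. indicator (F \<inter> (S \<times> UNIV)) (a,b) \<partial>B) \<le> ennreal q"
    proof (cases "a \<in> S")
      case True
      have "(\<integral>\<^sup>+b. indicator (F \<inter> (S \<times> UNIV)) (a,b) \<partial>B) = (\<integral>\<^sup>+b. indicator {b. (a,b) \<in> F} b \<partial>B)"
        using True by (intro nn_integral_cong) (auto simp: indicator_def)
      also have "\<dots> = emeasure (measure_pmf B) {b. (a,b) \<in> F}" by simp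
      also have "\<dots> = ennreal (measure_pmf.prob B {b. (a,b) \<in> F})"
        by (simp add: measure_pmf.emeasure_eq_measure)
      also have "\<dots> \<le> ennreal q" using assms(1)[OF True] by (rule ennreal_leI)
      finally show ?thesis .
    next
      case False
      then show ?thesis by (simp add: indicator_def)
    qed
  qed
  also have "\<dots> = ennreal q" by simp
  finally have 2: "measure_pmf.prob (pair_pmf A B) (F \<inter> (S \<times> UNIV)) \<le> q"
    using assms(2) by (simp add: measure_pmf.emeasure_eq_measure)
  have "measure_pmf.prob (pair_pmf A B) {(a,b). a \<notin> S \<or> (a,b) \<in> F}
      \<le> measure_pmf.prob (pair_pmf A B) (fst -` (-S) \<union> (F \<inter> (S \<times> UNIV)))"
    by (intro measure_pmf.finite_measure_mono sub) auto
  also have "\<dots> \<le> measure_pmf.prob (pair_pmf A B) (fst -` (-S)) + measure_pmf.prob (pair_pmf A B) (F \<inter> (S \<times> UNIV))"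
    by (intro measure_subadditive) (auto simp: measure_pmf.emeasure_eq_measure)
  finally show ?thesis using 1 2 by simp
qed


lemma collision:
  fixes n m u i j :: nat
  assumes "n > 0" "u < n" "i < m" "j < m" "i \<noteq> j"
  shows "measure_pmf.prob (Pi_pmf ({..<n} \<times> {..<m}) 0 (\<lambda>_. pmf_of_set {..<n})) {f. f (u,i) = f (u,j)} \<le> 1 / real n"
proof -
  let ?P = "Pi_pmf ({..<n} \<times> {..<m}) 0 (\<lambda>_. pmf_of_set {..<n})"
  have fin: "finite ({..<n} \<times> {..<m})" by simp
  have pm: "\<And>A. measure_pmf.prob (pmf_of_set {..<n}) A = real (card ({..<n} \<inter> A)) / real n"
    using assms(1) by (subst measure_pmf_of_set) auto
  have sub: "{f. f (u,i) = f (u,j)} \<subseteq> {f. \<forall>x\<in>{(u,i)}. f x \<in> -{..<n}} \<union>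
      (\<Union>v\<in>{..<n}. {f. \<forall>x\<in>{(u,i),(u,j)}. f x \<in> {v}})" by auto
  have 0: "measure_pmf.prob ?P {f. \<forall>x\<in>{(u,i)}. f x \<in> -{..<n}} = 0"
    using assms by (subst Pi_pmf_sub[OF fin]) (auto simp: pm)
  have 1: "measure_pmf.prob ?P {f. \<forall>x\<in>{(u,i),(u,j)}. f x \<in> {v}} = (1 / real n) * (1 / real n)" if "v < n" for v
    using assms that by (subst Pi_pmf_sub[OF fin]) (auto simp: pm)
  have "measure_pmf.prob ?P {f. f (u,i) = f (u,j)} \<le> measure_pmf.prob ?P ({f. \<forall>x\<in>{(u,i)}. f x \<in> -{..<n}} \<union>
      (\<Union>v\<in>{..<n}. {f. \<forall>x\<in>{(u,i),(u,j)}. f x \<in> {v}}))"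
    by (intro measure_pmf.finite_measure_mono sub) auto
  also have "\<dots> \<le> measure_pmf.prob ?P {f. \<forall>x\<in>{(u,i)}. f x \<in> -{..<n}} +
      measure_pmf.prob ?P (\<Union>v\<in>{..<n}. {f. \<forall>x\<in>{(u,i),(u,j)}. f x \<in> {v}})"
    by (intro measure_subadditive) (auto simp: measure_pmf.emeasure_eq_measure)
  also have "measure_pmf.prob ?P (\<Union>v\<in>{..<n}. {f. \<forall>x\<in>{(u,i),(u,j)}. f x \<in> {v}}) \<le>
     (\<Sum>v\<in>{..<n}. measure_pmf.prob ?P {f. \<forall>x\<in>{(u,i),(u,j)}. f x \<in> {v}})"
    by (intro measure_pmf.finite_measure_subadditive_finite) auto
  also have "\<dots> = real n * ((1 / real n) * (1 / real n))"
    using 1 by simp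
  also have "\<dots> = 1 / real n" using assms by (simp add: field_simps)
  finally show ?thesis using 0 by simp
qed

lemma allW:
  fixes n m u :: nat
  assumes "n > 0" "u < n" "T \<subseteq> {..<m}"
  shows "measure_pmf.prob (Pi_pmf ({..<n} \<times> {..<m}) 0 (\<lambda>_. pmf_of_set {..<n})) {f. \<forall>i\<in>T. f (u,i) \<in> W}
     = (real (card (W \<inter> {..<n})) / real n) ^ card T"
proof -
  have fin: "finite ({..<n} \<times> {..<m})" by simp
  have pm: "\<And>A. measure_pmf.prob (pmf_of_set {..<n}) A = real (card ({..<n} \<inter> A)) / real n"
    using assms(1) by (subst measure_pmf_of_set) auto
  have eq: "{f. \<forall>i\<in>T. f (u,i) \<in> W} = {f. \<forall>x\<in>(\<lambda>i. (u,i)) ` T. f x \<in> W}" by auto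
  have inj: "inj_on (\<lambda>i. (u,i)) T" by (auto simp: inj_on_def)
  show ?thesis
    unfolding eq using assms
    by (subst Pi_pmf_sub[OF fin]) (auto simp: pm prod.reindex[OF inj] Int_commute card_image[OF inj])
qed


lemma tgbad:
  fixes n m u h :: nat
  assumes "n > 0" "u < n"
  shows "measure_pmf.prob (Pi_pmf ({..<n} \<times> {..<m}) 0 (\<lambda>_. pmf_of_set {..<n}))
     {f. \<not> inj_on (\<lambda>i. f (u,i)) {..<m} \<or> h \<le> card {i\<in>{..<m}. f (u,i) \<in> W}}
     \<le> real m ^ 2 / real n + 2 ^ m * (real (card (W \<inter> {..<n})) / real n) ^ h"
proof -
  let ?P = "Pi_pmf ({..<n} \<times> {..<m}) 0 (\<lambda>_. pmf_of_set {..<n})"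
  define D where "D = {(i,j). i \<in> {..<m} \<and> j \<in> {..<m} \<and> i \<noteq> j}"
  define Ts where "Ts = {T. T \<subseteq> {..<m} \<and> card T = h}"
  let ?r = "real (card (W \<inter> {..<n})) / real n"
  have finD: "finite D" unfolding D_def
    by (rule finite_subset[of _ "{..<m} \<times> {..<m}"]) auto
  have finTs: "finite Ts" unfolding Ts_def by (rule finite_subset[of _ "Pow {..<m}"]) auto
  have sub: "{f. \<not> inj_on (\<lambda>i. f (u,i)) {..<m} \<or> h \<le> card {i\<in>{..<m}. f (u,i) \<in> W}} \<subseteq>
     (\<Union>(i,j)\<in>D. {f. f (u,i) = f (u,j)}) \<union> (\<Union>T\<in>Ts. {f. \<forall>i\<in>T. f (u,i) \<in> W})"
  proof
    fix f assume "f \<in> {f. \<not> inj_on (\<lambda>i. f (u,i)) {..<m} \<or> h \<le> card {i\<in>{..<m}. f (u,i) \<in> W}}"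
    then consider "\<not> inj_on (\<lambda>i. f (u,i)) {..<m}" | "h \<le> card {i\<in>{..<m}. f (u,i) \<in> W}" by blast
    then show "f \<in> (\<Union>(i,j)\<in>D. {f. f (u,i) = f (u,j)}) \<union> (\<Union>T\<in>Ts. {f. \<forall>i\<in>T. f (u,i) \<in> W})"
    proof cases
      case 1
      then obtain i j where "i < m" "j < m" "i \<noteq> j" "f (u,i) = f (u,j)" unfolding inj_on_def by auto
      then show ?thesis unfolding D_def by blast
    next
      case 2
      then obtain T where "T \<subseteq> {i\<in>{..<m}. f (u,i) \<in> W}" "card T = h"
        by (meson obtain_subset_with_card_n)
      then show ?thesis unfolding Ts_def by blast
    qed
  qed
  have "measure_pmf.prob ?P {f. \<not> inj_on (\<lambda>i. f (u,i)) {..<m} \<or> h \<le> card {i\<in>{..<m}. f (u,i) \<in> W}}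
     \<le> measure_pmf.prob ?P ((\<Union>(i,j)\<in>D. {f. f (u,i) = f (u,j)}) \<union> (\<Union>T\<in>Ts. {f. \<forall>i\<in>T. f (u,i) \<in> W}))"
    by (intro measure_pmf.finite_measure_mono sub) auto
  also have "\<dots> \<le> measure_pmf.prob ?P (\<Union>(i,j)\<in>D. {f. f (u,i) = f (u,j)}) + measure_pmf.prob ?P (\<Union>T\<in>Ts. {f. \<forall>i\<in>T. f (u,i) \<in> W})"
    by (intro measure_subadditive) (auto simp: measure_pmf.emeasure_eq_measure)
  also have "measure_pmf.prob ?P (\<Union>(i,j)\<in>D. {f. f (u,i) = f (u,j)}) \<le> (\<Sum>(i,j)\<in>D. measure_pmf.prob ?P {f. f (u,i) = f (u,j)})"
    unfolding case_prod_beta using finD by (intro measure_pmf.finite_measure_subadditive_finite) auto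
  also have "\<dots> \<le> (\<Sum>(i,j)\<in>D. 1 / real n)"
    by (intro sum_mono) (auto simp: D_def intro!: collision assms)
  also have "\<dots> = real (card D) / real n" by simp
  also have "\<dots> \<le> real m ^ 2 / real n"
  proof -
    have "card D \<le> card ({..<m} \<times> {..<m})" by (intro card_mono) (auto simp: D_def)
    then have "real (card D) \<le> real m ^ 2" by (simp add: power2_eq_square flip: of_nat_mult)
    then show ?thesis by (intro divide_right_mono) auto
  qed
  also have "measure_pmf.prob ?P (\<Union>T\<in>Ts. {f. \<forall>i\<in>T. f (u,i) \<in> W}) \<le> (\<Sum>T\<in>Ts. measure_pmf.prob ?P {f. \<forall>i\<in>T. f (u,i) \<in> W})"
    using finTs by (intro measure_pmf.finite_measure_subadditive_finite) auto
  also have "\<dots> = (\<Sum>T\<in>Ts. ?r ^ h)"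
    by (intro sum.cong refl) (auto simp: Ts_def allW[OF assms])
  also have "\<dots> = real (m choose h) * ?r ^ h"
    by (simp add: Ts_def n_subsets)
  also have "\<dots> \<le> 2 ^ m * ?r ^ h"
  proof -
    have "real (m choose h) \<le> 2 ^ m" using binomial_le_pow2[of m h] by (metis of_nat_le_iff of_nat_numeral of_nat_power)
    then show ?thesis by (intro mult_right_mono) auto
  qed
  finally show ?thesis by simp
qed


lemma senders_empty:
  assumes "0 \<le> p" "p \<le> 1" "B1 \<subseteq> {..<n}"
  shows "measure_pmf.prob (Pi_pmf {..<n} False (\<lambda>_. bernoulli_pmf p)) {act. senders n B1 act = {}}
     \<le> exp (- p * (real n - real (card B1)))"
proof -
  have eq: "{act. senders n B1 act = {}} = {act. \<forall>x\<in>{..<n} - B1. act x \<in> {False}}"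
    by (auto simp: senders_def)
  have "measure_pmf.prob (Pi_pmf {..<n} False (\<lambda>_. bernoulli_pmf p)) {act. senders n B1 act = {}}
      = (\<Prod>x\<in>{..<n} - B1. measure_pmf.prob (bernoulli_pmf p) {False})"
    unfolding eq by (rule Pi_pmf_sub) auto
  also have "\<dots> = (1 - p) ^ card ({..<n} - B1)"
    using assms by (simp add: measure_pmf_single)
  also have "\<dots> \<le> exp (- p) ^ card ({..<n} - B1)"
    using assms exp_ge_add_one_self[of "-p"] by (intro power_mono) auto
  also have "\<dots> = exp (- p * real (card ({..<n} - B1)))"
    by (simp add: exp_of_nat_mult[symmetric] mult.commute)
  also have "card ({..<n} - B1) = n - card B1"
    using assms(3) by (simp add: card_Diff_subset finite_subset)
  also have "real (n - card B1) = real n - real (card B1)"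
    using assms(3) card_mono[OF _ assms(3)] by simp
  finally show ?thesis .
qed

lemma det:
  assumes "u \<in> senders n B1 act" "inp u = xstar n inp B1 act"
    "inj_on (\<lambda>i. tg (u,i)) {..<num_targets n c2}"
    "card {i\<in>{..<num_targets n c2}. tg (u,i) \<in> B2 \<union> - {..<n}} < h"
  shows "num_targets n c2 < sigma1 n c2 inp B1 B2 act tg + h"
proof -
  define m where "m = num_targets n c2"
  define W where "W = B2 \<union> - {..<n}"
  define X where "X = xstar n inp B1 act"
  define G where "G = {i\<in>{..<m}. tg (u,i) \<notin> W}"
  define Bd where "Bd = {i\<in>{..<m}. tg (u,i) \<in> W}"
  define V where "V = (\<lambda>i. tg (u,i)) ` G"
  have finS: "finite (senders n B1 act)" unfolding senders_def by auto
  have leX: "inp w \<le> X" if "w \<in> senders n B1 act" for w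
    unfolding X_def xstar_def using finS that by (intro Max_ge) auto
  have "card {..<m} = card (G \<union> Bd)" by (rule arg_cong[where f=card]) (auto simp: G_def Bd_def)
  also have "\<dots> = card G + card Bd" by (intro card_Un_disjoint) (auto simp: G_def Bd_def)
  finally have cG: "m = card G + card Bd" by simp
  have "card V = card G" unfolding V_def
    by (intro card_image inj_on_subset[OF assms(3)]) (auto simp: G_def m_def)
  moreover have "card Bd < h" using assms(4) by (simp add: Bd_def m_def W_def)
  moreover have "V \<subseteq> {v \<in> {..<n}. val1 n c2 inp B1 B2 act tg v = Some X}"
  proof
    fix v assume "v \<in> V"
    then obtain i where i: "i < m" "tg (u,i) = v" "v \<notin> W" unfolding V_def G_def by auto
    then have vn: "v < n" "v \<notin> B2" unfolding W_def by auto
    let ?R = "{Some (inp u') | u'. u' \<in> senders n B1 act \<and> (\<exists>i < num_targets n c2. tg (u', i) = v)}"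
    have Rsub: "?R \<subseteq> Some ` inp ` senders n B1 act" by auto
    have finR: "finite ?R" by (rule finite_subset[OF Rsub]) (use finS in auto)
    have "Some X \<in> ?R" using assms(1,2) i unfolding X_def m_def by (metis (mono_tags, lifting) mem_Collect_eq)
    moreover have "val0 n inp B1 act v \<le> Some X" by (auto simp: val0_def leX)
    moreover have "y \<le> Some X" if "y \<in> ?R" for y using that leX by auto
    ultimately have "Max (insert (val0 n inp B1 act v) ?R) = Some X"
      using finR by (intro Max_eqI) auto
    then show "v \<in> {v \<in> {..<n}. val1 n c2 inp B1 B2 act tg v = Some X}"
      using vn by (simp add: val1_def recvd1_def)
  qed
  then have "card V \<le> sigma1 n c2 inp B1 B2 act tg"
    unfolding sigma1_def X_def by (intro card_mono) auto
  ultimately show ?thesis unfolding m_def[symmetric] using cG by linarith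
qed


lemma main:
  fixes n :: nat and \<epsilon> :: real
  assumes eps: "0 \<le> \<epsilon>" "\<epsilon> \<le> 1/10"
    and a1: "exp (-(9/5) * ln (real n)) \<le> real n powr (-1/4) / 3"
    and a2: "(4 * ln (real n) + 1)^2 / real n \<le> real n powr (-1/4) / 3"
    and a3: "exp (-(4/3) * ln (real n)) \<le> real n powr (-1/4) / 3"
    and a4: "2 * ln (real n) / real n \<le> 1"
    and a5: "1 \<le> ln (real n)"
    and B1: "B1 \<subseteq> {..<n}" and B2: "B2 \<subseteq> {..<n}"
    and cB1: "real (card B1) \<le> \<epsilon> * real n" and cB2: "real (card B2) \<le> \<epsilon> * real n"
  shows "measure_pmf.prob (round1_pmf n 2 4)
         {(act, tg). senders n B1 act \<noteq> {} \<and>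
                     real (sigma1 n 4 inp B1 B2 act tg) \<ge> 1 * ln (real n)}
       \<ge> 1 - real n powr (-1/4)"
proof -
  define L where "L = ln (real n)"
  have npos: "n > 0" using a5 by (cases "n = 0") auto
  define p where "p = 2 * ln (real n) / real n"
  have p01: "0 \<le> p" "p \<le> 1" using a4 a5 npos by (auto simp: p_def)
  define m where "m = num_targets n 4"
  have m_ge: "4 * L \<le> real m" unfolding m_def num_targets_def L_def by linarith
  have m_le: "real m \<le> 4 * L + 1" using a5 unfolding m_def num_targets_def L_def by linarith
  define h where "h = m - m div 2"
  define A where "A = Pi_pmf {..<n} False (\<lambda>_. bernoulli_pmf p)"
  define Bm where "Bm = Pi_pmf ({..<n} \<times> {..<m}) (0::nat) (\<lambda>_. pmf_of_set {..<n})"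
  have r1: "round1_pmf n 2 4 = pair_pmf A Bm"
    by (simp add: round1_pmf_def A_def Bm_def p_def m_def)
  define S where "S = {act. senders n B1 act \<noteq> {}}"
  define us where "us act = (SOME u. u \<in> senders n B1 act \<and> inp u = xstar n inp B1 act)" for act
  have hus: "us act \<in> senders n B1 act \<and> inp (us act) = xstar n inp B1 act" if "act \<in> S" for act
  proof -
    have finS: "finite (senders n B1 act)" unfolding senders_def by auto
    have "xstar n inp B1 act \<in> inp ` senders n B1 act"
      unfolding xstar_def using finS that by (intro Max_in) (auto simp: S_def)
    then have "\<exists>u. u \<in> senders n B1 act \<and> inp u = xstar n inp B1 act" by auto
    then show ?thesis unfolding us_def by (rule someI_ex)
  qed
  define W where "W = B2 \<union> - {..<n}"
  define F where "F = {(a,b). \<not> inj_on (\<lambda>i. b (us a,i)) {..<m} \<or> h \<le> card {i\<in>{..<m}. b (us a,i) \<in> W}}"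
  define r where "r = real (card (W \<inter> {..<n})) / real n"
  define q where "q = real m ^ 2 / real n + 2 ^ m * r ^ h"
  have q0: "q \<ge> 0" by (simp add: q_def r_def)
  have slice: "measure_pmf.prob Bm {b. (a,b) \<in> F} \<le> q" if "a \<in> S" for a
  proof -
    have "us a < n" using hus[OF that] by (auto simp: senders_def)
    then show ?thesis unfolding F_def q_def r_def Bm_def
      using tgbad[OF npos, of "us a" m h W] by simp
  qed
  define E where "E = {(act, tg). senders n B1 act \<noteq> {} \<and>
                     real (sigma1 n 4 inp B1 B2 act tg) \<ge> 1 * ln (real n)}"
  have compl: "- E \<subseteq> {(a,b). a \<notin> S \<or> (a,b) \<in> F}"
  proof
    fix x assume x: "x \<in> - E"
    obtain a b where ab: "x = (a,b)" by fastforce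
    show "x \<in> {(a,b). a \<notin> S \<or> (a,b) \<in> F}"
    proof (rule ccontr)
      assume "x \<notin> {(a,b). a \<notin> S \<or> (a,b) \<in> F}"
      then have aS: "a \<in> S" and nF: "(a,b) \<notin> F" using ab by auto
      have i1: "inj_on (\<lambda>i. b (us a,i)) {..<num_targets n 4}"
        using nF unfolding F_def m_def by simp
      have i2: "card {i\<in>{..<num_targets n 4}. b (us a,i) \<in> B2 \<union> - {..<n}} < h"
        using nF unfolding F_def W_def m_def by (simp add: not_le)
      have "m < sigma1 n 4 inp B1 B2 a b + h"
        unfolding m_def using hus[OF aS] i1 i2 by (intro det[where u="us a"]) auto
      then have "m div 2 < sigma1 n 4 inp B1 B2 a b" unfolding h_def by linarith
      then have "real m \<le> 2 * real (sigma1 n 4 inp B1 B2 a b)" by linarith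
      then have "1 * ln (real n) \<le> real (sigma1 n 4 inp B1 B2 a b)"
        using m_ge a5 unfolding L_def by linarith
      then have "x \<in> E" using aS ab by (auto simp: E_def S_def)
      then show False using x by simp
    qed
  qed
  have "measure_pmf.prob (pair_pmf A Bm) (- E) \<le> measure_pmf.prob (pair_pmf A Bm) {(a,b). a \<notin> S \<or> (a,b) \<in> F}"
    by (intro measure_pmf.finite_measure_mono compl) auto
  also have "\<dots> \<le> measure_pmf.prob A (-S) + q"
    by (intro pair_slice slice q0)
  also have "measure_pmf.prob A (-S) \<le> exp (-(9/5) * L)"
  proof -
    have "-S = {act. senders n B1 act = {}}" by (auto simp: S_def)
    then have "measure_pmf.prob A (-S) \<le> exp (- p * (real n - real (card B1)))"
      unfolding A_def using senders_empty[OF p01 B1] by simp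
    also have "\<dots> \<le> exp (-(9/5) * L)"
    proof -
      have "\<epsilon> * real n \<le> (1/10) * real n" by (rule mult_right_mono[OF eps(2)]) simp
      then have "real (card B1) \<le> real n / 10" using cB1 by linarith
      then have "p * (real n - real (card B1)) \<ge> p * (9/10 * real n)"
        using p01 by (intro mult_left_mono) auto
      also have "p * (9/10 * real n) = (9/5) * L" using npos by (simp add: p_def L_def)
      finally show ?thesis by simp
    qed
    finally show ?thesis .
  qed
  also have "q \<le> (4 * L + 1)^2 / real n + exp (-(4/3) * L)"
  proof -
    have "real m ^ 2 \<le> (4 * L + 1)^2" using m_le by (intro power_mono) auto
    then have t1: "real m ^ 2 / real n \<le> (4 * L + 1)^2 / real n" by (intro divide_right_mono) auto
    have "W \<inter> {..<n} = B2" using B2 by (auto simp: W_def)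
    moreover have "\<epsilon> * real n \<le> (1/10) * real n" by (rule mult_right_mono[OF eps(2)]) simp
    ultimately have "real (card B2) \<le> real n / 10" "W \<inter> {..<n} = B2" using cB2 by linarith+
    then have "r \<le> 1/10" using npos unfolding r_def
      by (simp add: divide_simps)
    then have "r ^ h \<le> (1/9) ^ h" unfolding r_def by (intro power_mono) auto
    also have "(1/9::real) ^ h = (1/3) ^ (2*h)" by (simp add: power_mult power2_eq_square)
    also have "\<dots> \<le> (1/3) ^ m" unfolding h_def by (intro power_decreasing) auto
    finally have "2 ^ m * r ^ h \<le> 2 ^ m * (1/3::real) ^ m" by (intro mult_left_mono) auto
    also have "\<dots> = (2/3) ^ m" by (simp add: power_divide power_mult_distrib[symmetric])
    also have "\<dots> \<le> exp (-1/3) ^ m" using exp_ge_add_one_self[of "-1/3"] by (intro power_mono) auto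
    also have "\<dots> = exp (- real m / 3)" by (simp add: exp_of_nat_mult[symmetric])
    also have "\<dots> \<le> exp (-(4/3) * L)" using m_ge by simp
    finally show ?thesis using t1 unfolding q_def by linarith
  qed
  finally have "measure_pmf.prob (pair_pmf A Bm) (- E) \<le> real n powr (-1/4)"
    using a1 a2 a3 unfolding L_def by linarith
  then show ?thesis
    unfolding r1 E_def[symmetric] using measure_pmf.prob_compl[of E "pair_pmf A Bm"] by (simp add: Compl_eq_Diff_UNIV)
qed


theorem lemma12:
  fixes \<epsilon> :: real
  assumes "0 \<le> \<epsilon>" and "\<epsilon> \<le> 1/10"
  shows "\<forall>d::nat. \<exists>c1 c2 \<delta> k :: real. c1 > 0 \<and> c2 > 0 \<and> \<delta> > 0 \<and> k > 0 \<and>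
    (\<exists>N::nat. \<forall>n \<ge> N. \<forall>(inp :: nat \<Rightarrow> nat) (B1 :: nat set) (B2 :: nat set).
       (\<forall>v < n. inp v < n ^ d) \<longrightarrow>
       B1 \<subseteq> {..<n} \<longrightarrow> B2 \<subseteq> {..<n} \<longrightarrow>
       real (card B1) \<le> \<epsilon> * real n \<longrightarrow> real (card B2) \<le> \<epsilon> * real n \<longrightarrow>
       measure_pmf.prob (round1_pmf n c1 c2)
         {(act, tg). senders n B1 act \<noteq> {} \<and>
                     real (sigma1 n c2 inp B1 B2 act tg) \<ge> \<delta> * ln (real n)}
       \<ge> 1 - real n powr (-k))"
proof (intro allI)
  fix d :: nat
  have ev: "eventually (\<lambda>x::real. exp (-(9/5) * ln x) \<le> x powr (-1/4) / 3 \<and>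
      (4 * ln x + 1)^2 / x \<le> x powr (-1/4) / 3 \<and> exp (-(4/3) * ln x) \<le> x powr (-1/4) / 3 \<and>
      2 * ln x / x \<le> 1 \<and> 1 \<le> ln x) at_top"
    by (intro eventually_conj; real_asymp)
  have "eventually (\<lambda>n::nat. exp (-(9/5) * ln (real n)) \<le> real n powr (-1/4) / 3 \<and>
      (4 * ln (real n) + 1)^2 / real n \<le> real n powr (-1/4) / 3 \<and> exp (-(4/3) * ln (real n)) \<le> real n powr (-1/4) / 3 \<and>
      2 * ln (real n) / real n \<le> 1 \<and> 1 \<le> ln (real n)) sequentially"
    by (rule eventually_compose_filterlim[OF ev filterlim_real_sequentially])
  then obtain N where N: "\<And>n. n \<ge> N \<Longrightarrow> exp (-(9/5) * ln (real n)) \<le> real n powr (-1/4) / 3 \<and>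
      (4 * ln (real n) + 1)^2 / real n \<le> real n powr (-1/4) / 3 \<and> exp (-(4/3) * ln (real n)) \<le> real n powr (-1/4) / 3 \<and>
      2 * ln (real n) / real n \<le> 1 \<and> 1 \<le> ln (real n)"
    unfolding eventually_sequentially by blast
  have "\<forall>n \<ge> N. \<forall>(inp :: nat \<Rightarrow> nat) (B1 :: nat set) (B2 :: nat set).
       (\<forall>v < n. inp v < n ^ d) \<longrightarrow>
       B1 \<subseteq> {..<n} \<longrightarrow> B2 \<subseteq> {..<n} \<longrightarrow>
       real (card B1) \<le> \<epsilon> * real n \<longrightarrow> real (card B2) \<le> \<epsilon> * real n \<longrightarrow>
       measure_pmf.prob (round1_pmf n 2 4)
         {(act, tg). senders n B1 act \<noteq> {} \<and>
                     real (sigma1 n 4 inp B1 B2 act tg) \<ge> 1 * ln (real n)}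
       \<ge> 1 - real n powr (-(1/4))"
  proof (intro allI impI)
    fix n inp B1 B2
    assume "n \<ge> N" "B1 \<subseteq> {..<n}" "B2 \<subseteq> {..<n}" "real (card B1) \<le> \<epsilon> * real n" "real (card B2) \<le> \<epsilon> * real n"
    then show "measure_pmf.prob (round1_pmf n 2 4)
         {(act, tg). senders n B1 act \<noteq> {} \<and>
                     real (sigma1 n 4 inp B1 B2 act tg) \<ge> 1 * ln (real n)}
       \<ge> 1 - real n powr (-(1/4))"
      using main[OF assms, of n B1 B2 inp] N[of n] by simp
  qed
  then show "\<exists>c1 c2 \<delta> k :: real. c1 > 0 \<and> c2 > 0 \<and> \<delta> > 0 \<and> k > 0 \<and>
    (\<exists>N::nat. \<forall>n \<ge> N. \<forall>(inp :: nat \<Rightarrow> nat) (B1 :: nat set) (B2 :: nat set).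
       (\<forall>v < n. inp v < n ^ d) \<longrightarrow>
       B1 \<subseteq> {..<n} \<longrightarrow> B2 \<subseteq> {..<n} \<longrightarrow>
       real (card B1) \<le> \<epsilon> * real n \<longrightarrow> real (card B2) \<le> \<epsilon> * real n \<longrightarrow>
       measure_pmf.prob (round1_pmf n c1 c2)
         {(act, tg). senders n B1 act \<noteq> {} \<and>
                     real (sigma1 n c2 inp B1 B2 act tg) \<ge> \<delta> * ln (real n)}
       \<ge> 1 - real n powr (-k))"
    by (intro exI[of _ 2] exI[of _ 4] exI[of _ 1] exI[of _ "1/4"]) auto
qed

end
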